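(* Let $p,q$ be probability distributions on $\{1,\dots,n\}$ and let $\mathbf p(i,j)$ be a minimum-entropy coupling of $p$ and $q$. Consider the weighted undirected bipartite graph $G$ with vertex set $\{\ell_1,\dots,\ell_n,r_1,\dots,r_n\}$ and edge set $\{(\ell_i,r_j)$ with weight $\mathbf p(i,j) : \mathbf p(i,j)>0\}$. Then $G$ is a forest, and every edge of maximum weight has a leaf of this forest as one of its endpoints.
   Context: A coupling of $p$ and $q$ is a joint distribution $\mathbf p(i,j)\ge 0$ on $\{1,\dots,n\}^2$ with $\sum_j\mathbf p(i,j)=p(i)$ and $\sum_i \mathbf p(i,j)=q(j)$; a minimum-entropy coupling minimizes $\sum_{i,j}\mathbf p(i,j)\log_2(1/\mathbf p(i,j))$. *)

theory Defs
  imports Complex_Main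
begin

definition prob_dist :: "nat \<Rightarrow> (nat \<Rightarrow> real) \<Rightarrow> bool" where
  "prob_dist n p \<longleftrightarrow> (\<forall>i\<in>{1..n}. p i \<ge> 0) \<and> (\<Sum>i=1..n. p i) = 1"

definition is_coupling :: "nat \<Rightarrow> (nat \<Rightarrow> real) \<Rightarrow> (nat \<Rightarrow> real) \<Rightarrow> (nat \<Rightarrow> nat \<Rightarrow> real) \<Rightarrow> bool" where
  "is_coupling n p q P \<longleftrightarrow>
     (\<forall>i\<in>{1..n}. \<forall>j\<in>{1..n}. P i j \<ge> 0) \<and>
     (\<forall>i\<in>{1..n}. (\<Sum>j=1..n. P i j) = p i) \<and>
     (\<forall>j\<in>{1..n}. (\<Sum>i=1..n. P i j) = q j)"

definition coupling_entropy :: "nat \<Rightarrow> (nat \<Rightarrow> nat \<Rightarrow> real) \<Rightarrow> real" where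
  "coupling_entropy n P = (\<Sum>i=1..n. \<Sum>j=1..n. (if P i j = 0 then 0 else P i j * log 2 (1 / P i j)))"

definition min_entropy_coupling :: "nat \<Rightarrow> (nat \<Rightarrow> real) \<Rightarrow> (nat \<Rightarrow> real) \<Rightarrow> (nat \<Rightarrow> nat \<Rightarrow> real) \<Rightarrow> bool" where
  "min_entropy_coupling n p q P \<longleftrightarrow> is_coupling n p q P \<and>
     (\<forall>Q. is_coupling n p q Q \<longrightarrow> coupling_entropy n P \<le> coupling_entropy n Q)"

definition coupling_vertices :: "nat \<Rightarrow> (nat + nat) set" where
  "coupling_vertices n = Inl ` {1..n} \<union> Inr ` {1..n}"

fun coupling_adj :: "nat \<Rightarrow> (nat \<Rightarrow> nat \<Rightarrow> real) \<Rightarrow> nat + nat \<Rightarrow> nat + nat \<Rightarrow> bool" where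
  "coupling_adj n P (Inl i) (Inr j) = (i \<in> {1..n} \<and> j \<in> {1..n} \<and> P i j > 0)"
| "coupling_adj n P (Inr j) (Inl i) = (i \<in> {1..n} \<and> j \<in> {1..n} \<and> P i j > 0)"
| "coupling_adj n P _ _ = False"

definition is_cycle :: "('a \<Rightarrow> 'a \<Rightarrow> bool) \<Rightarrow> 'a list \<Rightarrow> bool" where
  "is_cycle E cs \<longleftrightarrow> length cs \<ge> 3 \<and> distinct cs \<and>
     (\<forall>k. Suc k < length cs \<longrightarrow> E (cs ! k) (cs ! Suc k)) \<and> E (last cs) (hd cs)"

definition is_forest :: "('a \<Rightarrow> 'a \<Rightarrow> bool) \<Rightarrow> bool" where
  "is_forest E \<longleftrightarrow> \<not> (\<exists>cs. is_cycle E cs)"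

definition vdegree :: "('a \<Rightarrow> 'a \<Rightarrow> bool) \<Rightarrow> 'a set \<Rightarrow> 'a \<Rightarrow> nat" where
  "vdegree E V v = card {u \<in> V. E v u}"

definition is_leaf :: "('a \<Rightarrow> 'a \<Rightarrow> bool) \<Rightarrow> 'a set \<Rightarrow> 'a \<Rightarrow> bool" where
  "is_leaf E V v \<longleftrightarrow> v \<in> V \<and> vdegree E V v = 1"

end

theory Submission
  imports Defs
begin
definition gg :: "real \<Rightarrow> real" where "gg x = (if x = 0 then 0 else x * ln x)"

lemma tangent:
  assumes "0 < x" "0 \<le> y" "y \<noteq> x"
  shows "gg y > gg x + (ln x + 1) * (y - x)"
proof (cases "y = 0")
  case True thus ?thesis using assms by (simp add: gg_def algebra_simps)
next
  case False
  hence y: "y > 0" using assms by simp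
  have "x / y \<noteq> 1" using assms y by simp
  hence "ln (x / y) \<noteq> x / y - 1" using ln_eq_minus_one[of "x/y"] assms y by auto
  moreover have "ln (x / y) \<le> x / y - 1" using ln_le_minus_one[of "x/y"] assms y by simp
  ultimately have "ln (x/y) < x/y - 1" by simp
  hence "ln x - ln y < x / y - 1" using ln_divide_pos[of x y] assms y by simp
  hence "y * (ln x - ln y) < y * (x / y - 1)" using y by (intro mult_strict_left_mono) auto
  hence "y * ln x - y * ln y < x - y" using y by (simp add: algebra_simps)
  thus ?thesis using assms y by (simp add: gg_def algebra_simps)
qed

lemma cell_eq: "0 \<le> x \<Longrightarrow> (if x = 0 then 0 else x * log 2 (1 / x)) = - gg x / ln 2"
  by (simp add: gg_def log_def ln_div)

lemma ent_eq:
  assumes "is_coupling n p q P"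
  shows "coupling_entropy n P = - (\<Sum>i=1..n. \<Sum>j=1..n. gg (P i j)) / ln 2"
proof -
  have "coupling_entropy n P = (\<Sum>i=1..n. \<Sum>j=1..n. - gg (P i j) / ln 2)"
    unfolding coupling_entropy_def
    using assms unfolding is_coupling_def by (intro sum.cong refl cell_eq) auto
  also have "\<dots> = - (\<Sum>i=1..n. \<Sum>j=1..n. gg (P i j)) / ln 2"
    by (simp add: sum_divide_distrib sum_negf)
  finally show ?thesis .
qed

lemma better_contra:
  assumes "min_entropy_coupling n p q P" "is_coupling n p q Q"
    "(\<Sum>i=1..n. \<Sum>j=1..n. gg (Q i j)) > (\<Sum>i=1..n. \<Sum>j=1..n. gg (P i j))"
  shows False
proof -
  have cP: "is_coupling n p q P" using assms(1) by (simp add: min_entropy_coupling_def)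
  have "coupling_entropy n P \<le> coupling_entropy n Q" using assms(1,2) by (simp add: min_entropy_coupling_def)
  moreover have "coupling_entropy n Q < coupling_entropy n P"
    unfolding ent_eq[OF cP] ent_eq[OF assms(2)] using assms(3)
    by (intro divide_strict_right_mono) auto
  ultimately show False by simp
qed

lemma coupling_pert:
  assumes "is_coupling n p q P" "\<forall>i\<in>{1..n}. \<forall>j\<in>{1..n}. 0 \<le> P i j + D i j"
    "\<forall>i\<in>{1..n}. (\<Sum>j=1..n. D i j) = 0" "\<forall>j\<in>{1..n}. (\<Sum>i=1..n. D i j) = 0"
  shows "is_coupling n p q (\<lambda>i j. P i j + D i j)"
  using assms unfolding is_coupling_def by (simp add: sum.distrib)

lemma alt_shift:
  assumes "even L" "L > 0"
  shows "(\<Sum>k<L. (-1::real)^k * F (Suc k mod L)) = - (\<Sum>k<L. (-1)^k * F k)"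
proof -
  obtain m where m: "L = Suc m" using assms(2) by (cases L) auto
  have om: "odd m" using assms(1) m by simp
  have "(\<Sum>k<L. (-1::real)^k * F (Suc k mod L)) = (\<Sum>k<m. (-1::real)^k * F (Suc k)) + (-1)^m * F 0"
    unfolding m by (simp add: sum.lessThan_Suc)
  also have "\<dots> = (\<Sum>k<m. (-1::real)^k * F (Suc k)) - F 0" using om by simp
  also have "(\<Sum>k<L. (-1::real)^k * F k) = F 0 + (\<Sum>k<m. (-1::real)^(Suc k) * F (Suc k))"
    unfolding m by (subst sum.lessThan_Suc_shift) simp
  ultimately show ?thesis by (simp add: sum_negf)
qed

lemma adj_cases:
  "coupling_adj n P u v \<Longrightarrow>
   (\<exists>x y. u = Inl x \<and> v = Inr y \<and> x\<in>{1..n} \<and> y\<in>{1..n} \<and> P x y > 0) \<or>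
   (\<exists>x y. u = Inr y \<and> v = Inl x \<and> x\<in>{1..n} \<and> y\<in>{1..n} \<and> P x y > 0)"
  by (cases u; cases v) auto

lemma forest:
  assumes mec: "min_entropy_coupling n p q P"
  shows "is_forest (coupling_adj n P)"
  unfolding is_forest_def
proof (rule notI, elim exE)
  fix cs assume cyc: "is_cycle (coupling_adj n P) cs"
  have cP: "is_coupling n p q P" using mec by (simp add: min_entropy_coupling_def)
  define L where "L = length cs"
  define E where "E = coupling_adj n P"
  have L3: "L \<ge> 3" and dist: "distinct cs"
    and cons: "\<And>k. Suc k < L \<Longrightarrow> E (cs!k) (cs!Suc k)" and lh: "E (last cs) (hd cs)"
    using cyc by (auto simp: is_cycle_def L_def E_def)
  define nx where "nx k = Suc k mod L" for k
  have adj: "E (cs!k) (cs!(nx k))" if k: "k < L" for k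
  proof (cases "Suc k < L")
    case True thus ?thesis using cons by (simp add: nx_def)
  next
    case False
    hence "Suc k = L" using k by simp
    hence "k = L - 1" "nx k = 0" by (auto simp: nx_def)
    moreover have "cs \<noteq> []" using L3 L_def by auto
    ultimately show ?thesis using lh by (simp add: last_conv_nth hd_conv_nth L_def)
  qed
  define isl where "isl v = (case v of Inl _ \<Rightarrow> True | Inr _ \<Rightarrow> False)" for v :: "nat + nat"
  have alt: "\<And>u v. E u v \<Longrightarrow> isl u \<noteq> isl v"
    subgoal for u v by (cases u; cases v) (auto simp: E_def isl_def)
    done
  have altk: "k < L \<Longrightarrow> isl (cs!k) = (isl (cs!0) = even k)" for k
  proof (induction k)
    case 0 then show ?case by simp
  next
    case (Suc k)
    hence "E (cs!k) (cs!Suc k)" using cons by simp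
    then show ?case using alt Suc by auto
  qed
  have Leven: "even L"
  proof -
    have "nx (L - 1) = 0" using L3 by (simp add: nx_def)
    hence "isl (cs!(L-1)) \<noteq> isl (cs!0)" using alt adj[of "L-1"] L3 by auto
    hence "odd (L - 1)" using altk[of "L-1"] L3 by auto
    thus ?thesis using L3 by (cases L) auto
  qed
  define D where "D x y = (\<Sum>k<L. (-1::real)^k * ((if cs!k = Inl x \<and> cs!(nx k) = Inr y then 1 else 0)
      + (if cs!k = Inr y \<and> cs!(nx k) = Inl x then 1 else 0)))" for x y
  have nxL: "nx k = Suc k mod L" for k using nx_def by simp
  have rows: "(\<Sum>y=1..n. D x y) = 0" for x
  proof -
    have s1: "(\<Sum>y=1..n. (if cs!k = Inl x \<and> cs!(nx k) = Inr y then 1 else 0)::real)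
       = (if cs!k = Inl x then 1 else 0)" if k: "k < L" for k
    proof (cases "cs!k = Inl x")
      case True
      then obtain y0 where "cs!(nx k) = Inr y0" "y0 \<in> {1..n}"
        using adj_cases[of n P "cs!k" "cs!(nx k)"] adj[OF k] unfolding E_def by auto
      thus ?thesis using True by simp
    qed simp
    have s2: "(\<Sum>y=1..n. (if cs!k = Inr y \<and> cs!(nx k) = Inl x then 1 else 0)::real)
       = (if cs!(nx k) = Inl x then 1 else 0)" if k: "k < L" for k
    proof (cases "cs!(nx k) = Inl x")
      case True
      then obtain y0 where "cs!k = Inr y0" "y0 \<in> {1..n}"
        using adj_cases[of n P "cs!k" "cs!(nx k)"] adj[OF k] unfolding E_def by auto
      thus ?thesis using True by (simp add: eq_commute[of y0])
    qed simp
    have "(\<Sum>y=1..n. D x y) = (\<Sum>k<L. (-1::real)^k * ((\<Sum>y=1..n. (if cs!k = Inl x \<and> cs!(nx k) = Inr y then 1 else 0))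
      + (\<Sum>y=1..n. (if cs!k = Inr y \<and> cs!(nx k) = Inl x then 1 else 0))))"
      unfolding D_def by (subst sum.swap) (simp only: sum.distrib[symmetric] sum_distrib_left)
    also have "\<dots> = (\<Sum>k<L. (-1::real)^k * ((if cs!k = Inl x then 1 else 0) + (if cs!(nx k) = Inl x then 1 else 0)))"
      using s1 s2 by (intro sum.cong) auto
    also have "\<dots> = (\<Sum>k<L. (-1::real)^k * (if cs!k = Inl x then 1 else 0)) + (\<Sum>k<L. (-1::real)^k * (if cs!(Suc k mod L) = Inl x then 1 else 0))"
      by (simp add: distrib_left sum.distrib nxL)
    also have "\<dots> = 0" using alt_shift[OF Leven, of "\<lambda>k. if cs!k = Inl x then 1 else 0"] L3 by simp
    finally show ?thesis .
  qed
  have cols: "(\<Sum>x=1..n. D x y) = 0" for y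
  proof -
    have s1: "(\<Sum>x=1..n. (if cs!k = Inl x \<and> cs!(nx k) = Inr y then 1 else 0)::real)
       = (if cs!(nx k) = Inr y then 1 else 0)" if k: "k < L" for k
    proof (cases "cs!(nx k) = Inr y")
      case True
      then obtain x0 where "cs!k = Inl x0" "x0 \<in> {1..n}"
        using adj_cases[of n P "cs!k" "cs!(nx k)"] adj[OF k] unfolding E_def by auto
      thus ?thesis using True by (simp add: eq_commute[of x0])
    qed simp
    have s2: "(\<Sum>x=1..n. (if cs!k = Inr y \<and> cs!(nx k) = Inl x then 1 else 0)::real)
       = (if cs!k = Inr y then 1 else 0)" if k: "k < L" for k
    proof (cases "cs!k = Inr y")
      case True
      then obtain x0 where "cs!(nx k) = Inl x0" "x0 \<in> {1..n}"
        using adj_cases[of n P "cs!k" "cs!(nx k)"] adj[OF k] unfolding E_def by auto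
      thus ?thesis using True by simp
    qed simp
    have "(\<Sum>x=1..n. D x y) = (\<Sum>k<L. (-1::real)^k * ((\<Sum>x=1..n. (if cs!k = Inl x \<and> cs!(nx k) = Inr y then 1 else 0))
      + (\<Sum>x=1..n. (if cs!k = Inr y \<and> cs!(nx k) = Inl x then 1 else 0))))"
      unfolding D_def by (subst sum.swap) (simp only: sum.distrib[symmetric] sum_distrib_left)
    also have "\<dots> = (\<Sum>k<L. (-1::real)^k * ((if cs!(nx k) = Inr y then 1 else 0) + (if cs!k = Inr y then 1 else 0)))"
      using s1 s2 by (intro sum.cong) auto
    also have "\<dots> = (\<Sum>k<L. (-1::real)^k * (if cs!k = Inr y then 1 else 0)) + (\<Sum>k<L. (-1::real)^k * (if cs!(Suc k mod L) = Inr y then 1 else 0))"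
      by (simp add: distrib_left sum.distrib nxL)
    also have "\<dots> = 0" using alt_shift[OF Leven, of "\<lambda>k. if cs!k = Inr y then 1 else 0"] L3 by simp
    finally show ?thesis .
  qed
  have supp: "x \<in> {1..n} \<and> y \<in> {1..n} \<and> P x y > 0" if nz: "D x y \<noteq> 0" for x y
  proof -
    obtain k where k: "k < L" and "(-1::real)^k * ((if cs!k = Inl x \<and> cs!(nx k) = Inr y then 1 else 0)
      + (if cs!k = Inr y \<and> cs!(nx k) = Inl x then 1 else 0)) \<noteq> 0"
      using sum.not_neutral_contains_not_neutral[OF nz[unfolded D_def]] by auto
    hence "(cs!k = Inl x \<and> cs!(nx k) = Inr y) \<or> (cs!k = Inr y \<and> cs!(nx k) = Inl x)"
      by (auto split: if_splits)
    thus ?thesis using adj[OF k] unfolding E_def by auto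
  qed
  have cne: "cs \<noteq> []" using L3 L_def by auto
  have nx0: "nx 0 = 1" and nx1: "nx 1 = 2" using L3 by (auto simp: nx_def)
  have f1: "(cs!k = cs!0 \<and> cs!(nx k) = cs!1) = (k = 0)" if "k < L" for k
    using that L3 nx0 nth_eq_iff_index_eq[OF dist, of k 0] cne by (auto simp: L_def)
  have f2: "\<not> (cs!k = cs!1 \<and> cs!(nx k) = cs!0)" if "k < L" for k
    using that L3 nx1 nth_eq_iff_index_eq[OF dist, of k 1] nth_eq_iff_index_eq[OF dist, of 2 0] cne by (auto simp: L_def)
  obtain i0 j0 where nz0: "D i0 j0 \<noteq> 0"
  proof -
    have "E (cs!0) (cs!1)" using adj[of 0] L3 nx0 by simp
    then consider (A) i0 j0 where "cs!0 = Inl i0" "cs!1 = Inr j0"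
      | (B) i0 j0 where "cs!0 = Inr j0" "cs!1 = Inl i0"
      using adj_cases[of n P "cs!0" "cs!1"] unfolding E_def by blast
    thus ?thesis
    proof cases
      case A
      have "D i0 j0 = (\<Sum>k<L. (if k = 0 then 1 else 0))"
        unfolding D_def using f1 f2 A by (intro sum.cong refl) (auto simp del: One_nat_def)
      also have "\<dots> = 1" using L3 by simp
      finally show ?thesis using that by fastforce
    next
      case B
      have "D i0 j0 = (\<Sum>k<L. (if k = 0 then 1 else 0))"
        unfolding D_def using f1 f2 B by (intro sum.cong refl) (auto simp del: One_nat_def)
      also have "\<dots> = 1" using L3 by simp
      finally show ?thesis using that by fastforce
    qed
  qed
  have inR: "i0 \<in> {1..n}" "j0 \<in> {1..n}" "P i0 j0 > 0" using supp[OF nz0] by auto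
  define R where "R = {1..n::nat}"
  define S where "S = (\<lambda>(x,y). P x y / (1 + \<bar>D x y\<bar>)) ` {(x,y) \<in> R \<times> R. P x y > 0}"
  have finS: "finite S" unfolding S_def R_def by (intro finite_imageI) (auto intro: finite_subset[of _ "{1..n} \<times> {1..n}"])
  have neS: "S \<noteq> {}" unfolding S_def R_def using inR by auto
  have posS: "\<forall>s\<in>S. s > 0" unfolding S_def by (auto intro!: divide_pos_pos simp: add_pos_nonneg)
  define e where "e = Min S"
  have epos: "e > 0" using finS neS posS by (simp add: e_def Min_gr_iff)
  have ebound: "e * \<bar>D x y\<bar> < P x y" if nz: "D x y \<noteq> 0" for x y
  proof -
    have "P x y / (1 + \<bar>D x y\<bar>) \<in> S" using supp[OF nz] unfolding S_def R_def by force
    hence "e \<le> P x y / (1 + \<bar>D x y\<bar>)" using finS by (simp add: e_def)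
    hence "e * (1 + \<bar>D x y\<bar>) \<le> P x y" by (simp add: pos_le_divide_eq add_pos_nonneg)
    thus ?thesis using epos by (simp add: algebra_simps)
  qed
  have Pnn: "P x y \<ge> 0" if "x \<in> R" "y \<in> R" for x y using cP that unfolding is_coupling_def R_def by auto
  have cellnn: "0 \<le> P x y + t * D x y" if "x \<in> R" "y \<in> R" "\<bar>t\<bar> = e" for x y t
  proof (cases "D x y = 0")
    case True thus ?thesis using Pnn that by simp
  next
    case False
    have "\<bar>t * D x y\<bar> = e * \<bar>D x y\<bar>" using that by (simp add: abs_mult)
    thus ?thesis using ebound[OF False] by linarith
  qed
  have cellg: "2 * gg (P x y) \<le> gg (P x y + e * D x y) + gg (P x y + (-e) * D x y)"
    and cellgs: "D x y \<noteq> 0 \<Longrightarrow> 2 * gg (P x y) < gg (P x y + e * D x y) + gg (P x y + (-e) * D x y)"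
    if xR: "x \<in> R" "y \<in> R" for x y
  proof -
    show st: "2 * gg (P x y) < gg (P x y + e * D x y) + gg (P x y + (-e) * D x y)" if nz: "D x y \<noteq> 0"
    proof -
      have Pp: "P x y > 0" using supp[OF nz] by simp
      have a: "gg (P x y + e * D x y) > gg (P x y) + (ln (P x y) + 1) * (e * D x y)"
        using tangent[OF Pp cellnn[OF xR, of e], simplified] epos nz by (simp add: abs_of_pos)
      have b: "gg (P x y + (-e) * D x y) > gg (P x y) + (ln (P x y) + 1) * ((-e) * D x y)"
        using tangent[OF Pp cellnn[OF xR, of "-e"], simplified] epos nz by (simp add: abs_of_pos)
      show ?thesis using a b by (simp add: algebra_simps)
    qed
    show "2 * gg (P x y) \<le> gg (P x y + e * D x y) + gg (P x y + (-e) * D x y)"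
      using st by (cases "D x y = 0") force+
  qed
  have big: "(\<Sum>x\<in>R. \<Sum>y\<in>R. 2 * gg (P x y)) < (\<Sum>x\<in>R. \<Sum>y\<in>R. gg (P x y + e * D x y) + gg (P x y + (-e) * D x y))"
  proof (rule sum_strict_mono_ex1)
    show "finite R" by (simp add: R_def)
    show "\<forall>x\<in>R. (\<Sum>y\<in>R. 2 * gg (P x y)) \<le> (\<Sum>y\<in>R. gg (P x y + e * D x y) + gg (P x y + (-e) * D x y))"
      using cellg by (auto intro: sum_mono)
    show "\<exists>x\<in>R. (\<Sum>y\<in>R. 2 * gg (P x y)) < (\<Sum>y\<in>R. gg (P x y + e * D x y) + gg (P x y + (-e) * D x y))"
    proof (rule bexI[of _ i0])
      show "i0 \<in> R" using inR R_def by simp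
      show "(\<Sum>y\<in>R. 2 * gg (P i0 y)) < (\<Sum>y\<in>R. gg (P i0 y + e * D i0 y) + gg (P i0 y + (-e) * D i0 y))"
      proof (rule sum_strict_mono_ex1)
        show "finite R" by (simp add: R_def)
        show "\<forall>y\<in>R. 2 * gg (P i0 y) \<le> gg (P i0 y + e * D i0 y) + gg (P i0 y + (-e) * D i0 y)"
          using cellg inR R_def by auto
        show "\<exists>y\<in>R. 2 * gg (P i0 y) < gg (P i0 y + e * D i0 y) + gg (P i0 y + (-e) * D i0 y)"
          using cellgs[of i0 j0] inR R_def nz0 by auto
      qed
    qed
  qed
  have coup: "is_coupling n p q (\<lambda>x y. P x y + t * D x y)" if "\<bar>t\<bar> = e" for t
    by (rule coupling_pert[OF cP]) (use cellnn[OF _ _ that] rows cols in \<open>auto simp: R_def sum_distrib_left[symmetric]\<close>)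
  have "(\<Sum>x\<in>R. \<Sum>y\<in>R. gg (P x y + e * D x y)) > (\<Sum>x\<in>R. \<Sum>y\<in>R. gg (P x y))
     \<or> (\<Sum>x\<in>R. \<Sum>y\<in>R. gg (P x y + (-e) * D x y)) > (\<Sum>x\<in>R. \<Sum>y\<in>R. gg (P x y))"
    using big by (simp add: sum.distrib sum_distrib_left[symmetric]) linarith
  thus False
  proof
    assume "(\<Sum>x\<in>R. \<Sum>y\<in>R. gg (P x y + e * D x y)) > (\<Sum>x\<in>R. \<Sum>y\<in>R. gg (P x y))"
    thus False using better_contra[OF mec coup[of e]] epos by (simp add: R_def)
  next
    assume "(\<Sum>x\<in>R. \<Sum>y\<in>R. gg (P x y + (-e) * D x y)) > (\<Sum>x\<in>R. \<Sum>y\<in>R. gg (P x y))"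
    thus False using better_contra[OF mec coup[of "-e"]] epos by (simp add: R_def)
  qed
qed
lemma key:
  assumes "0 < t" "t \<le> c" "c \<le> a"
  shows "gg (a + t) + gg (c - t) > gg a + gg c"
proof -
  have a: "gg (a + t) > gg a + (ln a + 1) * t"
    using tangent[of a "a + t"] assms by simp
  have c: "gg (c - t) > gg c + (ln c + 1) * (- t)"
    using tangent[of c "c - t"] assms by simp
  have "ln c \<le> ln a" using assms by simp
  hence "(ln c) * t \<le> (ln a) * t" using assms by (intro mult_right_mono) auto
  thus ?thesis using a c by (simp add: algebra_simps)
qed

lemma key4:
  assumes "0 < b" "0 < c" "b \<le> a" "c \<le> a" "t = min b c"
  shows "gg (a + t) + gg (b - t) + gg (c - t) + gg t > gg a + gg b + gg c"
proof (cases "b \<le> c")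
  case True
  hence "t = b" using assms by simp
  thus ?thesis using key[of b c a] assms True by (simp add: gg_def)
next
  case False
  hence "t = c" using assms by simp
  thus ?thesis using key[of c b a] assms False by (simp add: gg_def)
qed

lemma maxleaf:
  assumes mec: "min_entropy_coupling n p q P"
    and ij: "i \<in> {1..n}" "j \<in> {1..n}" "P i j > 0"
    and mx: "\<forall>i'\<in>{1..n}. \<forall>j'\<in>{1..n}. P i' j' \<le> P i j"
  shows "is_leaf (coupling_adj n P) (coupling_vertices n) (Inl i) \<or>
       is_leaf (coupling_adj n P) (coupling_vertices n) (Inr j)"
proof (rule ccontr)
  assume nl: "\<not> ?thesis"
  have cP: "is_coupling n p q P" using mec by (simp add: min_entropy_coupling_def)
  define R where "R = {1..n::nat}"
  have Pnn: "P x y \<ge> 0" if "x \<in> R" "y \<in> R" for x y using cP that unfolding is_coupling_def R_def by auto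
  obtain j' where j': "j' \<in> R" "j' \<noteq> j" "P i j' > 0"
  proof (rule ccontr)
    assume "\<not> thesis"
    hence h: "\<forall>y\<in>R. P i y > 0 \<longrightarrow> y = j" using that by blast
    have "{u \<in> coupling_vertices n. coupling_adj n P (Inl i) u} = {Inr j}"
    proof (intro set_eqI iffI)
      fix u assume "u \<in> {u \<in> coupling_vertices n. coupling_adj n P (Inl i) u}"
      thus "u \<in> {Inr j}" using h by (cases u) (auto simp: R_def)
    qed (use ij in \<open>auto simp: coupling_vertices_def\<close>)
    hence "is_leaf (coupling_adj n P) (coupling_vertices n) (Inl i)"
      using ij by (simp add: is_leaf_def vdegree_def coupling_vertices_def)
    thus False using nl by simp
  qed
  obtain i' where i': "i' \<in> R" "i' \<noteq> i" "P i' j > 0"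
  proof (rule ccontr)
    assume "\<not> thesis"
    hence h: "\<forall>x\<in>R. P x j > 0 \<longrightarrow> x = i" using that by blast
    have "{u \<in> coupling_vertices n. coupling_adj n P (Inr j) u} = {Inl i}"
    proof (intro set_eqI iffI)
      fix u assume "u \<in> {u \<in> coupling_vertices n. coupling_adj n P (Inr j) u}"
      thus "u \<in> {Inl i}" using h by (cases u) (auto simp: R_def)
    qed (use ij in \<open>auto simp: coupling_vertices_def\<close>)
    hence "is_leaf (coupling_adj n P) (coupling_vertices n) (Inr j)"
      using ij by (simp add: is_leaf_def vdegree_def coupling_vertices_def)
    thus False using nl by simp
  qed
  have d0: "P i' j' = 0"
  proof (rule ccontr)
    assume "P i' j' \<noteq> 0"
    hence pos: "P i' j' > 0" using Pnn i' j' by force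
    have k3: "k < 3 \<Longrightarrow> k = 0 \<or> k = 1 \<or> k = 2" for k :: nat by auto
    have "is_cycle (coupling_adj n P) [Inl i, Inr j, Inl i', Inr j']"
      unfolding is_cycle_def using ij i' j' pos by (auto simp: R_def less_Suc_eq)
    thus False using forest[OF mec] by (auto simp: is_forest_def)
  qed
  define b where "b = P i j'"
  define c where "c = P i' j"
  define a where "a = P i j"
  define t where "t = min b c"
  have tpos: "t > 0" using i' j' by (simp add: t_def b_def c_def)
  define D where "D x y = t * ((if x = i then 1 else 0) - (if x = i' then 1 else 0)) * ((if y = j then 1 else 0) - (if y = j' then 1 else 0))" for x y
  have Dnn: "0 \<le> P x y + D x y" if "x \<in> R" "y \<in> R" for x y
    using Pnn[OF that] i' j' d0 tpos by (auto simp: D_def t_def b_def c_def)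
  have coup: "is_coupling n p q (\<lambda>x y. P x y + D x y)"
  proof (rule coupling_pert[OF cP])
    show "\<forall>i\<in>{1..n}. \<forall>j\<in>{1..n}. 0 \<le> P i j + D i j" using Dnn R_def by auto
    show "\<forall>x\<in>{1..n}. (\<Sum>y=1..n. D x y) = 0"
      using ij i' j' unfolding D_def R_def by (simp add: sum_distrib_left[symmetric] sum_subtractf)
    show "\<forall>y\<in>{1..n}. (\<Sum>x=1..n. D x y) = 0"
      using ij i' j' unfolding D_def R_def
      by (simp add: sum_distrib_right[symmetric] sum_distrib_left[symmetric] sum_subtractf)
  qed
  define C where "C = {(i,j),(i,j'),(i',j),(i',j')}"
  have "(\<Sum>x\<in>R. \<Sum>y\<in>R. gg (P x y + D x y)) - (\<Sum>x\<in>R. \<Sum>y\<in>R. gg (P x y))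
      = (\<Sum>(x,y)\<in>R\<times>R. gg (P x y + D x y) - gg (P x y))"
    by (simp add: sum.cartesian_product sum_subtractf[symmetric] case_prod_beta)
  also have "\<dots> = (\<Sum>(x,y)\<in>C. gg (P x y + D x y) - gg (P x y))"
    by (rule sum.mono_neutral_right) (use ij i' j' in \<open>auto simp: C_def R_def D_def split: if_splits\<close>)
  also have "\<dots> = (gg (a + t) - gg a) + (gg (b - t) - gg b) + (gg (c - t) - gg c) + (gg t - gg 0)"
    using i' j' d0 by (simp add: C_def D_def a_def b_def c_def algebra_simps)
  also have "\<dots> > 0"
    using key4[of b c a t] i' j' mx ij by (simp add: gg_def a_def b_def c_def t_def R_def)
  finally have "(\<Sum>x\<in>R. \<Sum>y\<in>R. gg (P x y + D x y)) > (\<Sum>x\<in>R. \<Sum>y\<in>R. gg (P x y))" by simp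
  thus False using better_contra[OF mec coup] by (simp add: R_def)
qed

theorem lemma2:
  fixes n :: nat and p q :: "nat \<Rightarrow> real" and P :: "nat \<Rightarrow> nat \<Rightarrow> real"
  assumes "prob_dist n p" and "prob_dist n q"
    and "min_entropy_coupling n p q P"
  shows "is_forest (coupling_adj n P) \<and>
    (\<forall>i\<in>{1..n}. \<forall>j\<in>{1..n}.
       P i j > 0 \<and> (\<forall>i'\<in>{1..n}. \<forall>j'\<in>{1..n}. P i' j' \<le> P i j) \<longrightarrow>
       is_leaf (coupling_adj n P) (coupling_vertices n) (Inl i) \<or>
       is_leaf (coupling_adj n P) (coupling_vertices n) (Inr j))"
  using forest[OF assms(3)] maxleaf[OF assms(3)] by blast

end
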